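(* Let $d\geq 1$ be a fixed integer. For each integer $n\geq1$ define $f_n:\mathbb{R}\to\mathbb{R}$ to be the function which is constant on each interval $\left[\frac{k-\frac nd}{\sqrt{n/d}},\frac{k+1-\frac nd}{\sqrt{n/d}}\right)$, $k\in\mathbb{Z}$, and satisfies $$f_n\!\left(\frac{k-\frac nd}{\sqrt{n/d}}\right)=\begin{cases}\sqrt{\frac nd}\,\dfrac{(n/d)^k e^{-n/d}}{k!} & \text{if } k \text{ is a non-negative integer},\\ 0 & \text{if } k \text{ is a negative integer}.\end{cases}$$ For a function $f:\mathbb{R}\to\mathbb{R}$ define $\Delta_n f(y)=\dfrac{f\big(y+\sqrt{d/n}\big)-f(y)}{\sqrt{d/n}}$ and let $\Delta_n^\alpha$ denote its $\alpha$-fold iterate. Then for each integer $\alpha\geq0$ and each $y\in\mathbb{R}$, $$\lim_{n\to\infty}\Delta_n^\alpha f_n(y)=\frac{\mathrm{d}^\alpha}{\mathrm{d}y^\alpha}\left(\frac{1}{\sqrt{2\pi}}e^{-y^2/2}\right).$$ Furthermore, for each integer $\alpha\geq0$ there exists a polynomial $P_\alpha$ such that $|\Delta_n^\alpha f_n(y)|<P_\alpha(y)e^{-|y|}$ for all $n\geq1$ and all $y\in\mathbb{R}$. *)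

theory Defs
  imports "HOL-Analysis.Analysis" "HOL-Computational_Algebra.Polynomial"
begin

text \<open>The step function f_n (depending on the fixed d): on the interval
  [(k - n/d)/sqrt(n/d), (k+1 - n/d)/sqrt(n/d)) it takes the value
  sqrt(n/d) (n/d)^k e^(-n/d) / k! if k >= 0, and 0 if k < 0.
  The point y lies in that interval iff k = floor(y sqrt(n/d) + n/d).\<close>
definition fstep :: "nat \<Rightarrow> nat \<Rightarrow> real \<Rightarrow> real" where
  "fstep d n y =
     (let lam = real n / real d;
          k = \<lfloor>y * sqrt lam + lam\<rfloor>
      in if k \<ge> 0 then sqrt lam * lam ^ nat k * exp (- lam) / fact (nat k) else 0)"

definition Delta :: "nat \<Rightarrow> nat \<Rightarrow> (real \<Rightarrow> real) \<Rightarrow> real \<Rightarrow> real" where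
  "Delta d n f y = (f (y + sqrt (real d / real n)) - f y) / sqrt (real d / real n)"

end

theory Submission
  imports Defs "HOL-Complex_Analysis.Complex_Analysis" "HOL-Probability.Probability"
begin

lemma deriv_funpow_exp: "(deriv ^^ k) (\<lambda>u. exp (c * u)) = (\<lambda>u. c ^ k * exp (c * u :: complex))"
proof (induction k)
  case 0 then show ?case by simp
next
  case (Suc k)
  show ?case
  proof
    fix u
    have "((\<lambda>u. c ^ k * exp (c * u)) has_field_derivative (c ^ Suc k * exp (c * u))) (at u)"
      by (auto intro!: derivative_eq_intros)
    then show "(deriv ^^ Suc k) (\<lambda>u. exp (c * u)) u = c ^ Suc k * exp (c * u)"
      using Suc by (simp add: DERIV_imp_deriv)
  qed
qed

lemma circle_int_pos:
  fixes lam :: complex and r :: real and k :: nat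
  assumes r: "r > 0"
  shows "((\<lambda>t. exp (lam * (- circlepath 0 r t)) / (- circlepath 0 r t) ^ k) has_integral lam^k / fact k) {0..1}"
proof -
  let ?g = "circlepath 0 r"
  have "((\<lambda>u. exp(-lam*u) / (u - 0)^Suc k) has_contour_integral (2*pi*\<i>/fact k * (deriv^^k)(\<lambda>u. exp(-lam*u)) 0)) ?g"
    by (rule Cauchy_has_contour_integral_higher_derivative_circlepath) (auto intro!: continuous_intros holomorphic_intros simp: assms)
  moreover have "(deriv^^k)(\<lambda>u. exp(-lam*u)) 0 = (-lam)^k"
    using deriv_funpow_exp[of k "-lam"] by simp
  ultimately have "((\<lambda>t. exp(-lam * ?g t)/(?g t - 0)^Suc k * vector_derivative ?g (at t within {0..1})) has_integral (2*pi*\<i>/fact k * (-lam)^k)) {0..1}"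
    unfolding has_contour_integral_def by simp
  hence "((\<lambda>t. (2*pi*\<i>*(-1)^k) * (exp (lam * (- ?g t)) / (- ?g t) ^ k)) has_integral (2*pi*\<i>/fact k * (-lam)^k)) {0..1}"
  proof (rule has_integral_eq[rotated])
    fix t :: real assume t: "t \<in> {0..1}"
    have ne: "?g t \<noteq> 0" using r by (simp add: circlepath)
    have "vector_derivative ?g (at t within {0..1}) = 2*pi*\<i>* ?g t"
      using t vector_derivative_circlepath01[of t 0 r] by (simp add: circlepath)
    then show "exp(-lam * ?g t)/(?g t - 0)^Suc k * vector_derivative ?g (at t within {0..1}) = (2*pi*\<i>*(-1)^k) * (exp (lam * (- ?g t)) / (- ?g t) ^ k)"
      using ne by (simp add: field_simps power_minus')
  qed
  hence "((\<lambda>t. (1/(2*pi*\<i>*(-1)^k)) * ((2*pi*\<i>*(-1)^k) * (exp (lam * (- ?g t)) / (- ?g t) ^ k))) has_integral (1/(2*pi*\<i>*(-1)^k)) * (2*pi*\<i>/fact k * (-lam)^k)) {0..1}"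
    by (rule has_integral_mult_right)
  moreover have "(1/(2*pi*\<i>*(-1)^k)) * (2*pi*\<i>/fact k * (-lam)^k) = lam^k / fact k"
    by (simp add: field_simps power_minus')
  ultimately show ?thesis by simp
qed

lemma circle_int_neg:
  fixes lam :: complex and r :: real and M :: nat
  assumes r: "r > 0" and M: "M \<ge> 1"
  shows "((\<lambda>t. exp (lam * (- circlepath 0 r t)) * (- circlepath 0 r t) ^ M) has_integral 0) {0..1}"
proof -
  let ?g = "circlepath 0 r"
  have "((\<lambda>u. (exp(-lam*u) * u^M) / (u - 0)^Suc 0) has_contour_integral (2*pi*\<i>/fact 0 * (deriv^^0)(\<lambda>u. exp(-lam*u) * u^M) 0)) ?g"
    by (rule Cauchy_has_contour_integral_higher_derivative_circlepath) (auto intro!: continuous_intros holomorphic_intros simp: assms)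
  then have "((\<lambda>t. (exp(-lam * ?g t) * ?g t ^ M)/(?g t - 0)^Suc 0 * vector_derivative ?g (at t within {0..1})) has_integral 0) {0..1}"
    unfolding has_contour_integral_def using M by (simp add: power_0_left)
  hence "((\<lambda>t. (2*pi*\<i>*(-1)^M) * (exp (lam * (- ?g t)) * (- ?g t) ^ M)) has_integral 0) {0..1}"
  proof (rule has_integral_eq[rotated])
    fix t :: real assume t: "t \<in> {0..1}"
    have ne: "?g t \<noteq> 0" using r by (simp add: circlepath)
    have "vector_derivative ?g (at t within {0..1}) = 2*pi*\<i>* ?g t"
      using t vector_derivative_circlepath01[of t 0 r] by (simp add: circlepath)
    then show "(exp(-lam * ?g t) * ?g t ^ M)/(?g t - 0)^Suc 0 * vector_derivative ?g (at t within {0..1}) = (2*pi*\<i>*(-1)^M) * (exp (lam * (- ?g t)) * (- ?g t) ^ M)"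
      using ne by (simp add: field_simps power_minus')
  qed
  hence "((\<lambda>t. (1/(2*pi*\<i>*(-1)^M)) * ((2*pi*\<i>*(-1)^M) * (exp (lam * (- ?g t)) * (- ?g t) ^ M))) has_integral (1/(2*pi*\<i>*(-1)^M)) * 0) {0..1}"
    by (rule has_integral_mult_right)
  then show ?thesis by simp
qed

definition Pc :: "complex \<Rightarrow> int \<Rightarrow> complex" where
  "Pc lam m = (if m \<ge> 0 then lam ^ nat m / fact (nat m) else 0)"

lemma circle_int:
  fixes lam :: complex and r :: real and m :: int
  assumes r: "r > 0"
  shows "((\<lambda>t. exp (lam * (- circlepath 0 r t)) * (- circlepath 0 r t) powi (-m)) has_integral Pc lam m) {0..1}"
proof (cases "m \<ge> 0")
  case True
  then obtain k where k: "m = int k" by (metis nonneg_eq_int)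
  show ?thesis using circle_int_pos[OF r, of lam k] k
    by (simp add: Pc_def power_int_minus divide_inverse)
next
  case False
  define M where "M = nat (-m)"
  have M: "m = - int M" "M \<ge> 1" using False by (auto simp: M_def)
  show ?thesis using circle_int_neg[OF r, of M lam] M False
    by (simp add: Pc_def)
qed

lemma rep_theta:
  fixes lam :: complex and r :: real and m :: int
  assumes r: "r > 0"
  shows "((\<lambda>\<theta>. exp (lam * (r * exp (\<i> * \<theta>))) * (r * exp (\<i> * \<theta>)) powi (-m)) has_integral (2 * pi * Pc lam m)) {-pi..pi}"
proof -
  let ?G = "\<lambda>\<theta>::real. exp (lam * (r * exp (\<i> * \<theta>))) * (r * exp (\<i> * \<theta>)) powi (-m)"
  have eq: "?G ((2*pi) *\<^sub>R t + (-pi)) = exp (lam * (- circlepath 0 r t)) * (- circlepath 0 r t) powi (-m)" for t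
  proof -
    have "exp (\<i> * complex_of_real ((2*pi) *\<^sub>R t + (-pi))) = - exp (2 * of_real pi * \<i> * of_real t)"
      by (simp add: algebra_simps exp_diff exp_pi_i')
    then show ?thesis by (simp add: circlepath)
  qed
  have "((\<lambda>t. ?G ((2*pi) *\<^sub>R t + (-pi))) has_integral (2 * pi * Pc lam m) /\<^sub>R (2*pi) ^ DIM(real))
     (cbox ((-pi - (-pi)) /\<^sub>R (2*pi)) ((pi - (-pi)) /\<^sub>R (2*pi)))"
  proof -
    have v: "(2 * pi * Pc lam m) /\<^sub>R (2*pi) ^ DIM(real) = Pc lam m"
      by (simp add: scaleR_conv_of_real)
    show ?thesis unfolding v
      using has_integral_eq[OF _ circle_int[OF r, of lam m], of "\<lambda>t. ?G ((2*pi) *\<^sub>R t + (-pi))"] eq by simp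
  qed
  then show ?thesis
    by (subst (asm) has_integral_affinity_iff) auto
qed

definition Ig :: "real \<Rightarrow> real \<Rightarrow> int \<Rightarrow> nat \<Rightarrow> real \<Rightarrow> complex" where
  "Ig lam r m \<alpha> \<theta> = exp (lam * (r * exp (\<i> * \<theta>))) * (r * exp (\<i> * \<theta>)) powi (-m)
      * (sqrt lam * (inverse (r * exp (\<i> * \<theta>)) - 1)) ^ \<alpha>"

lemma Ig_cont: "r > 0 \<Longrightarrow> continuous_on S (Ig lam r m \<alpha>)"
  unfolding Ig_def by (intro continuous_intros) auto

lemma Ig_int: "r > 0 \<Longrightarrow> Ig lam r m \<alpha> integrable_on {a..b}"
  by (rule integrable_continuous_interval) (rule Ig_cont)

lemma Ig_step:
  assumes r: "r > 0" and lam: "lam > 0"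
  shows "Ig lam r (m+1) \<alpha> \<theta> - Ig lam r m \<alpha> \<theta> = Ig lam r m (Suc \<alpha>) \<theta> / sqrt lam"
proof -
  let ?z = "complex_of_real r * exp (\<i> * \<theta>)"
  have z: "?z \<noteq> 0" using r by simp
  have e: "-(m+1) = (-m) + (-1)" by simp
  have "?z powi (-(m+1)) = ?z powi (-m) * inverse ?z"
    unfolding e using z by (subst power_int_add) auto
  then show ?thesis unfolding Ig_def using lam
    by (simp add: field_simps)
qed

lemma fstep_rep:
  assumes d: "d \<ge> 1" and n: "n \<ge> 1"
  shows "complex_of_real (fstep d n y) = of_real (sqrt (real n / real d) * exp (- (real n / real d)))
     * Pc (complex_of_real (real n / real d)) \<lfloor>y * sqrt (real n / real d) + real n / real d\<rfloor>"
  unfolding fstep_def Pc_def Let_def by simp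

lemma Ig0: "r > 0 \<Longrightarrow> integral {-pi..pi} (Ig lam r m 0) = 2*pi*Pc (complex_of_real lam) m"
  unfolding Ig_def power_0 mult_1_right by (rule integral_unique[OF rep_theta])

lemma Delta_rep:
  assumes d: "d \<ge> 1" and n: "n \<ge> 1" and r: "r > 0"
  shows "complex_of_real ((Delta d n ^^ \<alpha>) (fstep d n) y) =
    of_real (sqrt (real n / real d) * exp (- (real n / real d)) / (2*pi)) *
      integral {-pi..pi} (Ig (real n / real d) r \<lfloor>y * sqrt (real n / real d) + real n / real d\<rfloor> \<alpha>)"
proof (induction \<alpha> arbitrary: y)
  case 0
  have "integral {-pi..pi} (Ig (real n / real d) r \<lfloor>y * sqrt (real n / real d) + real n / real d\<rfloor> 0)
     = 2 * pi * Pc (complex_of_real (real n / real d)) \<lfloor>y * sqrt (real n / real d) + real n / real d\<rfloor>"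
    using Ig0[OF r] by simp
  then show ?case using fstep_rep[OF d n, of y] by simp
next
  case (Suc \<alpha>)
  define lam where "lam = real n / real d"
  define s where "s = sqrt lam"
  have lam: "lam > 0" using d n by (simp add: lam_def)
  have s: "s > 0" using lam by (simp add: s_def)
  have h: "sqrt (real d / real n) = 1 / s"
    unfolding s_def lam_def by (simp add: real_sqrt_divide)
  have fl: "\<lfloor>(y + 1/s) * s + lam\<rfloor> = \<lfloor>y * s + lam\<rfloor> + 1"
  proof -
    have "(y + 1/s) * s + lam = (y * s + lam) + 1" using s by (simp add: field_simps)
    then show ?thesis by (simp only: one_add_floor)
  qed
  let ?m = "\<lfloor>y * s + lam\<rfloor>"
  have "(Delta d n ^^ Suc \<alpha>) (fstep d n) y = ((Delta d n ^^ \<alpha>) (fstep d n) (y + 1/s) - (Delta d n ^^ \<alpha>) (fstep d n) y) * s"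
    using s by (simp add: Delta_def h)
  then have "complex_of_real ((Delta d n ^^ Suc \<alpha>) (fstep d n) y) =
     (complex_of_real ((Delta d n ^^ \<alpha>) (fstep d n) (y + 1/s)) - complex_of_real ((Delta d n ^^ \<alpha>) (fstep d n) y)) * s"
    by simp
  also have "\<dots> = of_real (s * exp (- lam) / (2*pi)) *
     (integral {-pi..pi} (Ig lam r (?m + 1) \<alpha>) - integral {-pi..pi} (Ig lam r ?m \<alpha>)) * s"
    using Suc.IH[of "y + 1/s"] Suc.IH[of y] fl unfolding lam_def[symmetric] s_def[symmetric]
    by (simp add: algebra_simps)
  also have "integral {-pi..pi} (Ig lam r (?m + 1) \<alpha>) - integral {-pi..pi} (Ig lam r ?m \<alpha>)
      = integral {-pi..pi} (\<lambda>\<theta>. Ig lam r ?m (Suc \<alpha>) \<theta> / s)"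
    using Ig_step[OF r lam] unfolding s_def
    by (subst integral_diff[symmetric]) (auto intro!: Ig_int r)
  also have "\<dots> = integral {-pi..pi} (Ig lam r ?m (Suc \<alpha>)) / s"
    by (simp add: divide_inverse integral_mult_left)
  finally show ?case using s unfolding lam_def[symmetric] s_def[symmetric] by simp
qed

lemma one_minus_cos_ge: assumes "\<bar>x\<bar> \<le> pi" shows "x^2 / 12 \<le> 1 - cos x"
proof -
  have "cmod (iexp x - (\<Sum>k\<le>3. (\<i> * complex_of_real x) ^ k / fact k)) \<le> \<bar>x\<bar> ^ Suc 3 / fact (Suc 3)"
    by (rule iexp_approx1)
  moreover have "\<bar>Re (iexp x - (\<Sum>k\<le>3. (\<i> * complex_of_real x) ^ k / fact k))\<bar> \<le> cmod (iexp x - (\<Sum>k\<le>3. (\<i> * complex_of_real x) ^ k / fact k))"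
    by (rule abs_Re_le_cmod)
  moreover have "Re (iexp x - (\<Sum>k\<le>3. (\<i> * complex_of_real x) ^ k / fact k)) = cos x - 1 + x^2/2"
    by (simp add: numeral_3_eq_3 fact_numeral Re_exp power2_eq_square)
  moreover have "\<bar>x\<bar> ^ Suc 3 / fact (Suc 3) = x^2 * x^2/24"
    by (simp add: fact_numeral numeral_3_eq_3 power_even_abs_numeral power2_eq_square)
  ultimately have c: "cos x \<le> 1 - x^2/2 + x^2 * x^2/24" by linarith
  have "\<bar>x\<bar>^2 \<le> pi^2" using assms by (intro power_mono) auto
  moreover have "pi^2 \<le> 10"
  proof -
    have p: "pi \<le> 3.15" using pi_approx(2) by simp
    have "pi * pi \<le> 3.15 * 3.15" by (rule mult_mono) (use p in auto)
    then show ?thesis by (simp add: power2_eq_square)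
  qed
  ultimately have x2: "x^2 \<le> 10" by simp
  have "x^2 * x^2 \<le> x^2 * 10" using x2 by (intro mult_left_mono) auto
  with c show ?thesis by linarith
qed

lemma norm_iexp_minus_one: "cmod (iexp x - 1) \<le> \<bar>x\<bar>"
  using iexp_approx1[of x 0] by simp

lemma abs_exp_minus_one: "\<bar>exp (v::real) - 1\<bar> \<le> \<bar>v\<bar> * exp \<bar>v\<bar>"
proof (cases "v \<ge> 0")
  case True
  have "1 - v \<le> exp (-v)" using exp_ge_add_one_self[of "-v"] by simp
  then have "exp v * (1 - v) \<le> exp v * exp (-v)" by (intro mult_left_mono) auto
  then have "exp v - v * exp v \<le> 1" by (simp add: algebra_simps exp_minus_inverse)
  then show ?thesis using True by (simp add: algebra_simps)
next
  case False
  have "1 + v \<le> exp v" by (rule exp_ge_add_one_self)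
  moreover have "exp v \<le> 1" using False by simp
  moreover have "-v \<le> -v * exp (-v)" using False by simp
  ultimately have "1 - exp v \<le> -v * exp(-v)" by linarith
  then show ?thesis using False \<open>exp v \<le> 1\<close> by (simp add: abs_if)
qed

lemma exp_taylor2_le: assumes "(u::real) > 0" shows "exp u - 1 - u \<le> u^2 * exp u"
proof (cases "u \<le> 1")
  case True
  then have "exp u \<le> 1 + u + u^2" using exp_bound[of u] assms by simp
  moreover have "u^2 \<le> u^2 * exp u" using assms by simp
  ultimately show ?thesis by simp
next
  case False
  then have "1 \<le> u^2" by (simp add: one_le_power)
  then have "exp u \<le> u^2 * exp u" by simp
  then show ?thesis using assms by linarith
qed

lemma exp_taylor2_neg_le: assumes "(u::real) > 0" shows "exp (-u) - 1 + u \<le> u^2"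
proof -
  have "1 + u \<le> exp u" by (rule exp_ge_add_one_self)
  then have "exp (-u) \<le> 1 / (1 + u)" using assms by (simp add: exp_minus field_simps)
  moreover have "1 / (1 + u) - 1 + u = u^2 / (1 + u)" using assms by (simp add: field_simps power2_eq_square)
  moreover have "u^2 / (1 + u) \<le> u^2" using assms by (simp add: divide_le_eq)
  ultimately show ?thesis by linarith
qed

lemma exp_powi: "exp (x::real) powi k = exp (real_of_int k * x)"
proof (cases "k \<ge> 0")
  case True
  then obtain j where "k = int j" by (metis nonneg_eq_int)
  then show ?thesis by (simp add: exp_of_nat_mult)
next
  case False
  then obtain j where "k = - int j" by (metis neg_int_cases less_le not_le minus_minus)
  then show ?thesis by (simp add: power_int_minus exp_of_nat_mult exp_minus)
qed

lemma gauss_moment_integrable: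
  assumes c: "(c::real) > 0"
  shows "(\<lambda>t::real. exp (- c * t^2) * \<bar>t\<bar>^k) integrable_on UNIV"
proof -
  define \<sigma> where "\<sigma> = sqrt (1 / (2*c))"
  have \<sigma>: "\<sigma> > 0" "\<sigma>^2 = 1/(2*c)" using c unfolding \<sigma>_def by (simp_all add: real_sqrt_gt_zero)
  have "integrable lborel (\<lambda>x. normal_density 0 \<sigma> x * \<bar>x - 0\<bar>^k)"
    by (rule integrable_normal_moment_abs) (rule \<sigma>(1))
  then have I1: "integrable lborel (\<lambda>x. sqrt (2 * pi * \<sigma>^2) * (normal_density 0 \<sigma> x * \<bar>x - 0\<bar>^k))"
    by (rule integrable_mult_right)
  have eq: "(\<lambda>x. sqrt (2 * pi * \<sigma>^2) * (normal_density 0 \<sigma> x * \<bar>x - 0\<bar>^k)) = (\<lambda>x. exp (- c * x^2) * \<bar>x\<bar>^k)"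
  proof
    fix x
    have "sqrt (2 * pi * \<sigma>^2) * normal_density 0 \<sigma> x = exp (- c * x^2)"
      using \<sigma> c by (simp add: normal_density_def field_simps)
    then show "sqrt (2 * pi * \<sigma>^2) * (normal_density 0 \<sigma> x * \<bar>x - 0\<bar>^k) = exp (- c * x^2) * \<bar>x\<bar>^k"
      by (simp add: mult.assoc[symmetric])
  qed
  have "integrable lborel (\<lambda>t. exp (- c * t^2) * \<bar>t\<bar>^k)" using I1 unfolding eq .
  then show ?thesis by (rule integrable_on_lborel)
qed

definition Hb :: "real \<Rightarrow> nat \<Rightarrow> real \<Rightarrow> real" where
  "Hb c \<alpha> t = exp (- c * t^2) * (1 + \<bar>t\<bar>)^\<alpha>"

lemma Hb_nonneg: "Hb c \<alpha> t \<ge> 0" unfolding Hb_def by simp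

lemma Hb_cont: "continuous_on S (Hb c \<alpha>)" unfolding Hb_def by (intro continuous_intros)

lemma one_plus_abs_pow_le: "(1 + \<bar>t::real\<bar>)^\<alpha> \<le> 2^\<alpha> * (1 + \<bar>t\<bar>^\<alpha>)"
proof (cases "\<bar>t\<bar> \<le> 1")
  case True
  then have "(1 + \<bar>t\<bar>)^\<alpha> \<le> 2^\<alpha>" by (intro power_mono) auto
  also have "\<dots> \<le> 2^\<alpha> * (1 + \<bar>t\<bar>^\<alpha>)" by simp
  finally show ?thesis .
next
  case False
  then have "(1 + \<bar>t\<bar>)^\<alpha> \<le> (2 * \<bar>t\<bar>)^\<alpha>" by (intro power_mono) auto
  also have "\<dots> \<le> 2^\<alpha> * (1 + \<bar>t\<bar>^\<alpha>)" by (simp add: power_mult_distrib)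
  finally show ?thesis .
qed

lemma Hb_integrable: assumes c: "c > 0" shows "Hb c \<alpha> integrable_on UNIV"
proof (rule integrable_on_all_intervals_integrable_bound)
  show "(\<lambda>x. if x \<in> UNIV then Hb c \<alpha> x else 0) integrable_on cbox a b" for a b
    by (auto intro: integrable_continuous_interval Hb_cont)
  show "norm (Hb c \<alpha> x) \<le> 2^\<alpha> * (exp (- c * x^2) * \<bar>x\<bar>^0 + exp (- c * x^2) * \<bar>x\<bar>^\<alpha>)" for x
  proof -
    have "norm (Hb c \<alpha> x) = exp (- c * x^2) * (1 + \<bar>x\<bar>)^\<alpha>" by (simp add: Hb_def)
    also have "\<dots> \<le> exp (- c * x^2) * (2^\<alpha> * (1 + \<bar>x\<bar>^\<alpha>))"
      by (intro mult_left_mono one_plus_abs_pow_le) auto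
    finally show ?thesis by (simp add: algebra_simps)
  qed
  show "(\<lambda>x. 2^\<alpha> * (exp (- c * x^2) * \<bar>x\<bar>^0 + exp (- c * x^2) * \<bar>x\<bar>^\<alpha>)) integrable_on UNIV"
    using integrable_cmul[OF integrable_add[OF gauss_moment_integrable[OF c, of 0] gauss_moment_integrable[OF c, of \<alpha>]], of "2^\<alpha>"]
    by simp
qed

lemma Hb_scaled_le:
  assumes c: "c > 0" and s: "s > 0"
  shows "s * integral {-pi..pi} (\<lambda>\<theta>. Hb c \<alpha> (s * \<theta>)) \<le> integral UNIV (Hb c \<alpha>)"
proof -
  let ?I = "integral {-(pi * s)..(pi * s)} (Hb c \<alpha>)"
  have "(Hb c \<alpha> has_integral ?I) (cbox (-(pi * s)) (pi * s))"
    using Hb_cont by (simp add: integrable_continuous_interval integrable_integral)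
  then have "((\<lambda>x. Hb c \<alpha> (s *\<^sub>R x + 0)) has_integral ?I /\<^sub>R s ^ DIM(real)) (cbox ((-(pi * s) - 0) /\<^sub>R s) ((pi * s - 0) /\<^sub>R s))"
    by (subst has_integral_affinity_iff) (use s in auto)
  moreover have "(-(pi * s) - 0) /\<^sub>R s = -pi" "(pi * s - 0) /\<^sub>R s = pi" using s by auto
  ultimately have "((\<lambda>x. Hb c \<alpha> (s *\<^sub>R x + 0)) has_integral ?I /\<^sub>R s ^ DIM(real)) (cbox (-pi) pi)"
    by (simp only:)
  then have "((\<lambda>\<theta>. Hb c \<alpha> (s * \<theta>)) has_integral ?I / s) {-pi..pi}"
    using s by (simp add: divide_inverse mult.commute)
  then have "s * integral {-pi..pi} (\<lambda>\<theta>. Hb c \<alpha> (s * \<theta>)) = ?I"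
    using s by (simp add: integral_unique)
  also have "?I \<le> integral UNIV (Hb c \<alpha>)"
    by (rule integral_subset_le) (auto simp: Hb_nonneg Hb_integrable c Hb_cont integrable_continuous_interval)
  finally show ?thesis .
qed

lemma Ig_norm_le:
  assumes lam: "lam > 0" and r: "r > 0" and th: "\<bar>\<theta>\<bar> \<le> pi"
    and rlo: "r \<ge> exp (- q)" and E: "inverse r \<le> E" and A: "sqrt lam * \<bar>inverse r - 1\<bar> \<le> E" and E0: "E \<ge> 0"
  shows "cmod (Ig lam r m \<alpha> \<theta>) \<le> exp (lam * r) * r powi (-m) * E^\<alpha> * Hb (exp (- q) / 12) \<alpha> (sqrt lam * \<theta>)"
proof -
  let ?s = "sqrt lam"
  have s: "?s > 0" using lam by simp
  have ss: "?s * ?s = lam" using lam by simp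
  have n1: "cmod (exp (complex_of_real lam * (complex_of_real r * iexp \<theta>))) = exp (lam * r * cos \<theta>)"
    by (simp add: norm_exp_eq_Re Re_exp Im_exp)
  have cosb: "\<theta>^2 / 12 \<le> 1 - cos \<theta>" using th by (rule one_minus_cos_ge)
  have "lam * r * cos \<theta> = lam * r - lam * r * (1 - cos \<theta>)" by (simp add: algebra_simps)
  also have "lam * r * (1 - cos \<theta>) \<ge> lam * exp (-q) * (\<theta>^2/12)"
    using lam r rlo cosb by (intro mult_mono) auto
  then have "lam * r - lam * r * (1 - cos \<theta>) \<le> lam * r - exp (- q) / 12 * (?s * \<theta>)^2"
    using ss by (simp add: power_mult_distrib algebra_simps power2_eq_square)
  finally have n1': "cmod (exp (complex_of_real lam * (complex_of_real r * iexp \<theta>))) \<le> exp (lam * r) * exp (- (exp (- q) / 12) * (?s * \<theta>)^2)"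
    unfolding n1 by (simp add: exp_add[symmetric])
  have n2: "cmod ((complex_of_real r * iexp \<theta>) powi (-m)) = r powi (-m)"
    using r by (simp add: norm_power_int norm_mult)
  have eqi: "inverse (complex_of_real r * iexp \<theta>) - 1 = of_real (inverse r) * (iexp (-\<theta>) - 1) + of_real (inverse r - 1)"
    by (simp add: algebra_simps exp_minus)
  have bnd1: "cmod (of_real (inverse r) * (iexp (-\<theta>) - 1)) \<le> inverse r * \<bar>\<theta>\<bar>"
  proof -
    have "cmod (iexp (-\<theta>) - 1) \<le> \<bar>\<theta>\<bar>" using norm_iexp_minus_one[of "-\<theta>"] by simp
    then have "inverse r * cmod (iexp (-\<theta>) - 1) \<le> inverse r * \<bar>\<theta>\<bar>" using r by (intro mult_left_mono) auto
    then show ?thesis using r by (simp add: norm_mult norm_inverse)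
  qed
  have "cmod (inverse (complex_of_real r * iexp \<theta>) - 1) \<le> inverse r * \<bar>\<theta>\<bar> + \<bar>inverse r - 1\<bar>"
    unfolding eqi using norm_triangle_ineq[of "of_real (inverse r) * (iexp (-\<theta>) - 1)" "of_real (inverse r - 1)"] bnd1
    by (simp del: of_real_diff of_real_inverse)
  then have "cmod (complex_of_real ?s * (inverse (complex_of_real r * iexp \<theta>) - 1)) \<le> ?s * (inverse r * \<bar>\<theta>\<bar> + \<bar>inverse r - 1\<bar>)"
    using s by (simp add: norm_mult)
  also have "\<dots> = inverse r * \<bar>?s * \<theta>\<bar> + ?s * \<bar>inverse r - 1\<bar>"
    using s by (simp add: algebra_simps abs_mult)
  also have "\<dots> \<le> E * \<bar>?s * \<theta>\<bar> + E"
    using E A by (intro add_mono mult_right_mono) auto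
  finally have n3: "cmod (complex_of_real ?s * (inverse (complex_of_real r * iexp \<theta>) - 1)) \<le> E * (1 + \<bar>?s * \<theta>\<bar>)"
    by (simp add: algebra_simps)
  have n3': "cmod (complex_of_real ?s * (inverse (complex_of_real r * iexp \<theta>) - 1)) ^ \<alpha> \<le> E^\<alpha> * (1 + \<bar>?s * \<theta>\<bar>)^\<alpha>"
    unfolding power_mult_distrib[symmetric] by (intro power_mono n3) auto
  have "cmod (Ig lam r m \<alpha> \<theta>) = cmod (exp (complex_of_real lam * (complex_of_real r * iexp \<theta>))) * r powi (-m)
      * cmod (complex_of_real ?s * (inverse (complex_of_real r * iexp \<theta>) - 1)) ^ \<alpha>"
    unfolding Ig_def by (simp add: norm_mult norm_power n2)
  also have "\<dots> \<le> (exp (lam * r) * exp (- (exp (- q) / 12) * (?s * \<theta>)^2)) * r powi (-m) * (E^\<alpha> * (1 + \<bar>?s * \<theta>\<bar>)^\<alpha>)"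
    using r by (intro mult_mono n1' n3' mult_nonneg_nonneg) auto
  also have "\<dots> = exp (lam * r) * r powi (-m) * E^\<alpha> * Hb (exp (- q) / 12) \<alpha> (?s * \<theta>)"
    by (simp add: Hb_def)
  finally show ?thesis .
qed


definition Cb :: "nat \<Rightarrow> nat \<Rightarrow> real" where
  "Cb d \<alpha> = exp (exp (sqrt d) + sqrt d) * exp (sqrt d) ^ \<alpha> * integral UNIV (Hb (exp (- sqrt d) / 12) \<alpha>) / (2 * pi)"

lemma exponent_bound:
  fixes lam u s q E y :: real
  assumes lam: "lam > 0" and u: "u > 0" and s: "s > 0" and su: "s * u = 1" and lu: "lam * u = s" and lu2: "lam * u^2 = 1"
    and uq: "u \<le> q" and E: "exp q = E"
  shows "exp (- lam) * exp (lam * exp ((if y \<ge> 0 then 1 else -1) * u)) * exp ((if y \<ge> 0 then 1 else -1) * u) powi (- \<lfloor>y * s + lam\<rfloor>)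
     \<le> exp (E + q - \<bar>y\<bar>)"
proof -
  let ?m = "\<lfloor>y * s + lam\<rfloor>"
  have q0: "q \<ge> 0" using u uq by simp
  have E1: "E \<ge> 1" using q0 E one_le_exp_iff[of q] by simp
  have fl1: "real_of_int ?m > y * s + lam - 1" by linarith
  have fl2: "real_of_int ?m \<le> y * s + lam" by linarith
  have ysu: "y * s * u = y" using su by (simp add: mult.assoc)
  show ?thesis
  proof (cases "y \<ge> 0")
    case True
    have "- lam + lam * exp u - real_of_int ?m * u \<le> lam * (exp u - 1 - u) + u - y"
    proof -
      have "real_of_int ?m * u \<ge> (y * s + lam - 1) * u" using fl1 u by (intro mult_right_mono) auto
      moreover have "(y * s + lam - 1) * u = y + s - u"
        by (simp only: left_diff_distrib distrib_right ysu lu mult_1_left)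
      ultimately have "real_of_int ?m * u \<ge> y + s - u" by simp
      then show ?thesis using lu by (simp add: algebra_simps)
    qed
    also have "lam * (exp u - 1 - u) \<le> lam * (u^2 * exp u)"
      using exp_taylor2_le[OF u] lam by (intro mult_left_mono) auto
    also have "lam * (u^2 * exp u) = exp u" using lu2 by (simp add: mult.assoc[symmetric])
    also have "exp u \<le> E" using uq E by auto
    finally have "- lam + lam * exp u - real_of_int ?m * u \<le> E + q - \<bar>y\<bar>" using True uq by simp
    then have "exp (- lam + lam * exp u - real_of_int ?m * u) \<le> exp (E + q - \<bar>y\<bar>)" by simp
    moreover have "exp (- lam) * exp (lam * exp u) * exp u powi (- ?m) = exp (- lam + lam * exp u - real_of_int ?m * u)"
      unfolding exp_powi by (simp only: exp_add[symmetric]) (simp add: algebra_simps)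
    ultimately show ?thesis using True by simp
  next
    case False
    have "- lam + lam * exp (-u) + real_of_int ?m * u \<le> lam * (exp (-u) - 1 + u) + y"
    proof -
      have "real_of_int ?m * u \<le> (y * s + lam) * u" using fl2 u by (intro mult_right_mono) auto
      moreover have "(y * s + lam) * u = y + s"
        by (simp only: distrib_right ysu lu)
      ultimately have "real_of_int ?m * u \<le> y + s" by simp
      then show ?thesis using lu by (simp add: algebra_simps)
    qed
    also have "lam * (exp (-u) - 1 + u) \<le> lam * u^2"
      using exp_taylor2_neg_le[OF u] lam by (intro mult_left_mono) auto
    finally have "- lam + lam * exp (-u) + real_of_int ?m * u \<le> E + q - \<bar>y\<bar>" using False lu2 E1 q0 by simp
    then have "exp (- lam + lam * exp (-u) + real_of_int ?m * u) \<le> exp (E + q - \<bar>y\<bar>)" by simp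
    moreover have "exp (- lam) * exp (lam * exp (- u)) * exp (- u) powi (- ?m) = exp (- lam + lam * exp (- u) + real_of_int ?m * u)"
      unfolding exp_powi by (simp only: exp_add[symmetric]) (simp add: algebra_simps)
    ultimately show ?thesis using False by simp
  qed
qed

lemma Delta_bound:
  assumes d: "d \<ge> 1" and n: "n \<ge> 1"
  shows "\<bar>(Delta d n ^^ \<alpha>) (fstep d n) y\<bar> \<le> Cb d \<alpha> * exp (- \<bar>y\<bar>)"
proof -
  define lam where "lam = real n / real d"
  define s where "s = sqrt lam"
  define u where "u = 1 / s"
  define q where "q = sqrt (real d)"
  define E where "E = exp q"
  define \<sigma> :: real where "\<sigma> = (if y \<ge> 0 then 1 else -1)"
  define r where "r = exp (\<sigma> * u)"
  define m where "m = \<lfloor>y * s + lam\<rfloor>"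
  define c where "c = exp (- q) / 12"
  have lam: "lam > 0" using d n by (simp add: lam_def)
  have s: "s > 0" using lam by (simp add: s_def)
  have u: "u > 0" using s by (simp add: u_def)
  have ss: "s * s = lam" using lam by (simp add: s_def)
  have su: "s * u = 1" using s by (simp add: u_def)
  have lu: "lam * u = s" using ss su s by (simp add: u_def field_simps)
  have lu2: "lam * u^2 = 1" using lu su by (simp add: power2_eq_square mult.assoc[symmetric])
  have uq: "u \<le> q"
  proof -
    have "u = sqrt (real d / real n)" unfolding u_def s_def lam_def by (simp add: real_sqrt_divide)
    also have "\<dots> \<le> sqrt (real d)"
    proof (intro real_sqrt_le_mono)
      have "real d * 1 \<le> real d * real n" using n by (intro mult_left_mono) auto
      then show "real d / real n \<le> real d" using n by (simp add: divide_le_eq)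
    qed
    finally show ?thesis by (simp add: q_def)
  qed
  have r: "r > 0" by (simp add: r_def)
  have \<sigma>abs: "\<bar>\<sigma> * u\<bar> = u" using u by (simp add: \<sigma>_def)
  have rlo: "r \<ge> exp (- q)" unfolding r_def using \<sigma>abs uq by (simp add: abs_le_iff)
  have Ei: "inverse r \<le> E" unfolding r_def E_def using \<sigma>abs uq by (simp add: exp_minus[symmetric] abs_le_iff)
  have A: "s * \<bar>inverse r - 1\<bar> \<le> E"
  proof -
    have "\<bar>inverse r - 1\<bar> = \<bar>exp (- (\<sigma> * u)) - 1\<bar>" by (simp add: r_def exp_minus)
    also have "\<dots> \<le> \<bar>- (\<sigma> * u)\<bar> * exp \<bar>- (\<sigma> * u)\<bar>" by (rule abs_exp_minus_one)
    also have "\<dots> = u * exp u" using \<sigma>abs by simp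
    finally have "s * \<bar>inverse r - 1\<bar> \<le> s * (u * exp u)" using s by (intro mult_left_mono) auto
    also have "\<dots> = exp u" using su by (simp add: mult.assoc[symmetric])
    also have "\<dots> \<le> E" using uq by (simp add: E_def)
    finally show ?thesis .
  qed
  have E0: "E \<ge> 0" by (simp add: E_def)
  define K where "K = exp (lam * r) * r powi (-m) * E^\<alpha>"
  have K0: "K \<ge> 0" using r E0 by (simp add: K_def)
  have c: "c > 0" by (simp add: c_def)
  have pt: "cmod (Ig lam r m \<alpha> \<theta>) \<le> K * Hb c \<alpha> (s * \<theta>)" if "\<theta> \<in> {-pi..pi}" for \<theta>
    using Ig_norm_le[OF lam r _ rlo Ei _ E0, of \<theta> m \<alpha>] that A unfolding K_def c_def s_def
    by (simp add: abs_le_iff)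
  have rep: "complex_of_real ((Delta d n ^^ \<alpha>) (fstep d n) y) = of_real (s * exp (- lam) / (2*pi)) * integral {-pi..pi} (Ig lam r m \<alpha>)"
    using Delta_rep[OF d n r, of \<alpha> y] unfolding lam_def[symmetric] s_def[symmetric] m_def[symmetric] .
  have eqD: "\<bar>(Delta d n ^^ \<alpha>) (fstep d n) y\<bar> = (s * exp (- lam) / (2*pi)) * cmod (integral {-pi..pi} (Ig lam r m \<alpha>))"
  proof -
    have "\<bar>(Delta d n ^^ \<alpha>) (fstep d n) y\<bar> = cmod (complex_of_real ((Delta d n ^^ \<alpha>) (fstep d n) y))"
      by simp
    also have "\<dots> = (s * exp (- lam) / (2*pi)) * cmod (integral {-pi..pi} (Ig lam r m \<alpha>))"
      unfolding rep norm_mult norm_of_real using s by simp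
    finally show ?thesis .
  qed
  have "cmod (integral {-pi..pi} (Ig lam r m \<alpha>)) \<le> integral {-pi..pi} (\<lambda>\<theta>. K * Hb c \<alpha> (s * \<theta>))"
    by (rule integral_norm_bound_integral[OF Ig_int[OF r] integrable_continuous_interval pt])
       (auto simp: Hb_def intro!: continuous_intros)
  also have "\<dots> = K * integral {-pi..pi} (\<lambda>\<theta>. Hb c \<alpha> (s * \<theta>))"
    by simp
  finally have i1: "cmod (integral {-pi..pi} (Ig lam r m \<alpha>)) \<le> K * integral {-pi..pi} (\<lambda>\<theta>. Hb c \<alpha> (s * \<theta>))" .
  have I0: "integral UNIV (Hb c \<alpha>) \<ge> 0"
    by (rule integral_nonneg[OF Hb_integrable[OF c]]) (simp add: Hb_nonneg)
  have mono: "x * E^\<alpha> * integral UNIV (Hb c \<alpha>) / (2 * pi) \<le> y * E^\<alpha> * integral UNIV (Hb c \<alpha>) / (2 * pi)" if "x \<le> y" for x y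
    using that E0 I0 by (intro divide_right_mono mult_right_mono) auto
  have "\<bar>(Delta d n ^^ \<alpha>) (fstep d n) y\<bar> \<le> (s * exp (- lam) / (2*pi)) * (K * integral {-pi..pi} (\<lambda>\<theta>. Hb c \<alpha> (s * \<theta>)))"
    unfolding eqD using s by (intro mult_left_mono i1) auto
  also have "\<dots> = (exp (- lam) / (2*pi)) * K * (s * integral {-pi..pi} (\<lambda>\<theta>. Hb c \<alpha> (s * \<theta>)))"
    by (simp add: algebra_simps)
  also have "\<dots> \<le> (exp (- lam) / (2*pi)) * K * integral UNIV (Hb c \<alpha>)"
    using Hb_scaled_le[OF c s, of \<alpha>] K0 by (intro mult_left_mono) auto
  also have "(exp (- lam) / (2*pi)) * K * integral UNIV (Hb c \<alpha>) = (exp (- lam) * exp (lam * r) * r powi (-m)) * (E^\<alpha> * integral UNIV (Hb c \<alpha>) / (2*pi))"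
    by (simp add: K_def)
  also have "\<dots> \<le> exp (E + q - \<bar>y\<bar>) * (E^\<alpha> * integral UNIV (Hb c \<alpha>) / (2*pi))"
  proof (rule mult_right_mono)
    show "exp (- lam) * exp (lam * r) * r powi (-m) \<le> exp (E + q - \<bar>y\<bar>)"
      using exponent_bound[OF lam u s su lu lu2 uq E_def[symmetric], of y]
      unfolding r_def \<sigma>_def m_def by simp
    show "0 \<le> E^\<alpha> * integral UNIV (Hb c \<alpha>) / (2*pi)" using E0 I0 by simp
  qed
  also have "\<dots> = Cb d \<alpha> * exp (- \<bar>y\<bar>)"
    unfolding Cb_def E_def q_def c_def by (simp add: exp_add exp_diff field_simps exp_minus_inverse)
  finally show ?thesis .
qed

lemma lim_by_bound:
  fixes a :: "nat \<Rightarrow> 'a::real_normed_vector"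
  assumes "\<And>n. norm (a n - L) \<le> b n" "b \<longlonglongrightarrow> 0"
  shows "a \<longlonglongrightarrow> L"
proof -
  have "(\<lambda>n. a n - L) \<longlonglongrightarrow> 0"
    by (rule Lim_null_comparison[OF _ assms(2)]) (use assms(1) in auto)
  then show ?thesis by (simp add: LIM_zero_iff)
qed

lemma cont_dominated_integrable:
  fixes f :: "real \<Rightarrow> 'b::euclidean_space"
  assumes "continuous_on UNIV f" "\<And>t. norm (f t) \<le> g t" "g integrable_on UNIV"
  shows "f integrable_on UNIV"
proof (rule integrable_on_all_intervals_integrable_bound[OF _ _ assms(3)])
  show "(\<lambda>x. if x \<in> UNIV then f x else 0) integrable_on cbox a b" for a b
    using continuous_on_subset[OF assms(1), of "{a..b}"] by (simp add: integrable_continuous_interval)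
qed (use assms(2) in auto)

definition Gf :: "nat \<Rightarrow> real \<Rightarrow> real \<Rightarrow> complex" where
  "Gf \<alpha> y t = (- \<i> * of_real t) ^ \<alpha> * of_real (exp (- (t^2) / 2)) * iexp (- (y * t))"

lemma Gf_cont: "continuous_on UNIV (Gf \<alpha> y)"
  unfolding Gf_def by (intro continuous_intros) auto

lemma Gf_norm: "cmod (Gf \<alpha> y t) = exp (- (1/2) * t^2) * \<bar>t\<bar>^\<alpha>"
  unfolding Gf_def by (simp add: norm_mult norm_power)

lemma Gf_int: "Gf \<alpha> y integrable_on UNIV"
proof -
  have gi: "(\<lambda>t::real. exp (- (1/2) * t^2) * \<bar>t\<bar>^\<alpha>) integrable_on UNIV" by (rule gauss_moment_integrable) simp
  show ?thesis by (rule cont_dominated_integrable[OF Gf_cont _ gi]) (simp add: Gf_norm)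
qed

lemma quot_lim:
  assumes "h \<longlonglongrightarrow> 0" "\<And>k. h k \<noteq> 0"
  shows "(\<lambda>k. (iexp (- (h k * t)) - 1) / of_real (h k)) \<longlonglongrightarrow> - \<i> * of_real t"
proof (rule lim_by_bound)
  fix k
  have "cmod (iexp (- (h k * t)) - (\<Sum>j\<le>1. (\<i> * complex_of_real (- (h k * t))) ^ j / fact j)) \<le> \<bar>- (h k * t)\<bar> ^ Suc 1 / fact (Suc 1)"
    by (rule iexp_approx1)
  then have b: "cmod (iexp (- (h k * t)) - 1 + \<i> * of_real (h k * t)) \<le> (h k)^2 * t^2 / 2"
    by (simp add: power_mult_distrib algebra_simps power2_eq_square)
  have "(iexp (- (h k * t)) - 1) / of_real (h k) - - \<i> * of_real t = (iexp (- (h k * t)) - 1 + \<i> * of_real (h k * t)) / of_real (h k)"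
    using assms(2)[of k] by (simp add: field_simps)
  then have "cmod ((iexp (- (h k * t)) - 1) / of_real (h k) - - \<i> * of_real t) = cmod (iexp (- (h k * t)) - 1 + \<i> * of_real (h k * t)) / \<bar>h k\<bar>"
    by (simp add: norm_divide)
  also have "\<dots> \<le> ((h k)^2 * t^2 / 2) / \<bar>h k\<bar>"
    using b by (intro divide_right_mono) auto
  also have "\<dots> = \<bar>h k\<bar> * (t^2 / 2)"
    using assms(2)[of k] by (simp add: power2_eq_square field_simps abs_mult_self_eq)
  finally show "cmod ((iexp (- (h k * t)) - 1) / of_real (h k) - - \<i> * of_real t) \<le> \<bar>h k\<bar> * (t^2 / 2)" .
next
  show "(\<lambda>k. \<bar>h k\<bar> * (t^2 / 2)) \<longlonglongrightarrow> 0"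
    by (rule tendsto_mult_left_zero[OF tendsto_rabs_zero[OF assms(1)]])
qed

lemma quot_bound: "h \<noteq> 0 \<Longrightarrow> cmod ((iexp (- (h * t)) - 1) / of_real h) \<le> \<bar>t\<bar>"
  using norm_iexp_minus_one[of "- (h * t)"] by (simp add: norm_divide divide_le_eq abs_mult mult.commute)

lemma FT0: "integral UNIV (Gf 0 y) = of_real (sqrt (2 * pi) * exp (- (y^2) / 2))"
proof -
  interpret real_distribution std_normal_distribution by (rule real_dist_normal_dist)
  let ?f = "\<lambda>x::real. iexp ((- y) * x)"
  have meas: "?f \<in> borel_measurable lborel" by (simp add: borel_measurable_continuous_onI continuous_intros)
  have ch: "char std_normal_distribution (- y) = of_real (exp (- (y^2) / 2))"
    by (simp add: char_std_normal_distribution)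
  have "integrable std_normal_distribution ?f"
    by (rule integrable_iexp) (auto intro!: borel_measurable_continuous_onI continuous_intros)
  then have int: "integrable lborel (\<lambda>x. std_normal_density x *\<^sub>R ?f x)"
    by (subst (asm) integrable_density) (auto simp: meas)
  have "char std_normal_distribution (- y) = integral\<^sup>L lborel (\<lambda>x. std_normal_density x *\<^sub>R ?f x)"
    unfolding char_def by (rule integral_density) (auto simp: meas)
  also have "\<dots> = integral UNIV (\<lambda>x. std_normal_density x *\<^sub>R ?f x)"
    by (rule integral_lborel[symmetric, OF int])
  finally have e1: "integral UNIV (\<lambda>x. std_normal_density x *\<^sub>R ?f x) = of_real (exp (- (y^2) / 2))"
    using ch by simp
  have "Gf 0 y = (\<lambda>x. of_real (sqrt (2 * pi)) * (std_normal_density x *\<^sub>R ?f x))"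
    by (rule ext) (simp add: Gf_def std_normal_density_def scaleR_conv_of_real)
  then have "integral UNIV (Gf 0 y) = of_real (sqrt (2 * pi)) * integral UNIV (\<lambda>x. std_normal_density x *\<^sub>R ?f x)"
    by (simp only: integral_mult_right)
  then show ?thesis using e1 by simp
qed

lemma Gf_shift: "Gf \<alpha> (y + h) t = Gf \<alpha> y t * iexp (- (h * t))"
  unfolding Gf_def by (simp add: algebra_simps exp_add[symmetric])

lemma Gf_Suc: "Gf (Suc \<alpha>) y t = Gf \<alpha> y t * (- \<i> * of_real t)"
  unfolding Gf_def by (simp add: algebra_simps)

lemma F_norm: "h \<noteq> 0 \<Longrightarrow> cmod (Gf \<alpha> y t * ((iexp (- (h * t)) - 1) / of_real h)) \<le> exp (- (1/2) * t^2) * \<bar>t\<bar>^Suc \<alpha>"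
proof -
  assume h: "h \<noteq> 0"
  have "cmod (Gf \<alpha> y t * ((iexp (- (h * t)) - 1) / of_real h)) = (exp (- (1/2) * t^2) * \<bar>t\<bar>^\<alpha>) * cmod ((iexp (- (h * t)) - 1) / of_real h)"
    by (simp only: norm_mult Gf_norm)
  also have "\<dots> \<le> (exp (- (1/2) * t^2) * \<bar>t\<bar>^\<alpha>) * \<bar>t\<bar>"
    by (intro mult_left_mono quot_bound h) auto
  finally show ?thesis by (simp add: algebra_simps)
qed

lemma FT_deriv:
  "((\<lambda>y. Re (integral UNIV (Gf \<alpha> y))) has_real_derivative Re (integral UNIV (Gf (Suc \<alpha>) y))) (at y)"
proof -
  have "((\<lambda>z. (Re (integral UNIV (Gf \<alpha> z)) - Re (integral UNIV (Gf \<alpha> y))) / (z - y)) \<longlongrightarrow> Re (integral UNIV (Gf (Suc \<alpha>) y))) (at y)"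
    unfolding tendsto_at_iff_sequentially
  proof (intro allI impI)
    fix X :: "nat \<Rightarrow> real" assume X: "\<forall>i. X i \<in> UNIV - {y}" "X \<longlonglongrightarrow> y"
    define h where "h k = X k - y" for k
    have h0: "h k \<noteq> 0" for k using X(1) by (auto simp: h_def)
    have hl: "h \<longlonglongrightarrow> 0" unfolding h_def using X(2) by (simp add: LIM_zero)
    define F where "F k t = Gf \<alpha> y t * ((iexp (- (h k * t)) - 1) / of_real (h k))" for k t
    have Fint: "F k integrable_on UNIV" for k
    proof (rule cont_dominated_integrable)
      show "continuous_on UNIV (F k)" unfolding F_def Gf_def by (intro continuous_intros) (auto simp: h0)
      show "cmod (F k t) \<le> exp (- (1/2) * t^2) * \<bar>t\<bar>^Suc \<alpha>" for t
        unfolding F_def by (rule F_norm[OF h0])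
      show "(\<lambda>t::real. exp (- (1/2) * t^2) * \<bar>t\<bar>^Suc \<alpha>) integrable_on UNIV"
        by (rule gauss_moment_integrable) simp
    qed
    have lim: "(\<lambda>k. integral UNIV (F k)) \<longlonglongrightarrow> integral UNIV (Gf (Suc \<alpha>) y)"
    proof (rule dominated_convergence(2)[OF Fint])
      show "(\<lambda>t::real. exp (- (1/2) * t^2) * \<bar>t\<bar>^Suc \<alpha>) integrable_on UNIV"
        by (rule gauss_moment_integrable) simp
      show "norm (F k t) \<le> exp (- (1/2) * t^2) * \<bar>t\<bar>^Suc \<alpha>" for k t
        unfolding F_def by (rule F_norm[OF h0])
      show "(\<lambda>k. F k t) \<longlonglongrightarrow> Gf (Suc \<alpha>) y t" for t
        unfolding F_def Gf_Suc by (intro tendsto_mult tendsto_const quot_lim hl h0)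
    qed
    have eq: "(Re (integral UNIV (Gf \<alpha> (X k))) - Re (integral UNIV (Gf \<alpha> y))) / (X k - y) = Re (integral UNIV (F k))" for k
    proof -
      have "integral UNIV (Gf \<alpha> (X k)) - integral UNIV (Gf \<alpha> y) = integral UNIV (\<lambda>t. Gf \<alpha> (X k) t - Gf \<alpha> y t)"
        by (rule integral_diff[symmetric]) (auto intro: Gf_int)
      also have "(\<lambda>t. Gf \<alpha> (X k) t - Gf \<alpha> y t) = (\<lambda>t. of_real (h k) * F k t)"
      proof
        fix t
        have "X k = y + h k" by (simp add: h_def)
        then show "Gf \<alpha> (X k) t - Gf \<alpha> y t = of_real (h k) * F k t"
          unfolding F_def using h0[of k] by (simp add: Gf_shift field_simps)
      qed
      also have "integral UNIV (\<lambda>t. of_real (h k) * F k t) = of_real (h k) * integral UNIV (F k)"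
        by simp
      finally have "integral UNIV (Gf \<alpha> (X k)) - integral UNIV (Gf \<alpha> y) = of_real (h k) * integral UNIV (F k)" .
      then have "Re (integral UNIV (Gf \<alpha> (X k)) - integral UNIV (Gf \<alpha> y)) = Re (of_real (h k) * integral UNIV (F k))"
        by simp
      then have "Re (integral UNIV (Gf \<alpha> (X k))) - Re (integral UNIV (Gf \<alpha> y)) = h k * Re (integral UNIV (F k))"
        by simp
      then show ?thesis using h0[of k] by (simp add: h_def)
    qed
    show "((\<lambda>z. (Re (integral UNIV (Gf \<alpha> z)) - Re (integral UNIV (Gf \<alpha> y))) / (z - y)) \<circ> X) \<longlonglongrightarrow> Re (integral UNIV (Gf (Suc \<alpha>) y))"
      unfolding comp_def eq by (intro tendsto_Re lim)
  qed
  then show ?thesis by (simp add: has_field_derivative_iff)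
qed


lemma ident: "(deriv ^^ \<alpha>) (\<lambda>t. exp (- (t^2) / 2) / sqrt (2 * pi)) = (\<lambda>y. Re (integral UNIV (Gf \<alpha> y)) / (2 * pi))"
proof (induction \<alpha>)
  case 0
  show ?case
  proof
    fix y :: real
    have q: "2 * pi / sqrt (2 * pi) = sqrt (2 * pi)" by (rule real_div_sqrt) simp
    have p: "sqrt (2 * pi) > 0" by simp
    have "Re (integral UNIV (Gf 0 y)) / (2 * pi) = sqrt (2 * pi) * exp (- (y^2) / 2) / (2 * pi)"
      unfolding FT0 by simp
    also have "\<dots> = exp (- (y^2) / 2) / sqrt (2 * pi)" using p q by (simp add: field_simps)
    finally show "(deriv ^^ 0) (\<lambda>t. exp (- (t^2) / 2) / sqrt (2 * pi)) y = Re (integral UNIV (Gf 0 y)) / (2 * pi)"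
      by simp
  qed
next
  case (Suc \<alpha>)
  show ?case
  proof
    fix y :: real
    have "((\<lambda>y. Re (integral UNIV (Gf \<alpha> y)) / (2 * pi)) has_real_derivative Re (integral UNIV (Gf (Suc \<alpha>) y)) / (2 * pi)) (at y)"
      by (intro DERIV_cdivide FT_deriv)
    then show "(deriv ^^ Suc \<alpha>) (\<lambda>t. exp (- (t^2) / 2) / sqrt (2 * pi)) y = Re (integral UNIV (Gf (Suc \<alpha>) y)) / (2 * pi)"
      using Suc by (simp add: DERIV_imp_deriv)
  qed
qed

lemma cexp_powi: "exp (z::complex) powi k = exp (of_int k * z)"
proof (cases "k \<ge> 0")
  case True
  then obtain j where "k = int j" by (metis nonneg_eq_int)
  then show ?thesis by (simp add: exp_of_nat_mult)
next
  case False
  then obtain j where "k = - int j" by (metis neg_int_cases less_le not_le minus_minus)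
  then show ?thesis by (simp add: power_int_minus exp_of_nat_mult exp_minus)
qed

lemma ptwise_lim:
  fixes s lam :: "nat \<Rightarrow> real" and m :: "nat \<Rightarrow> int"
  assumes s: "\<And>k. s k > 0" and lam: "\<And>k. lam k = (s k)^2"
    and m1: "\<And>k. of_int (m k) \<le> y * s k + lam k" and m2: "\<And>k. y * s k + lam k < of_int (m k) + 1"
    and u: "(\<lambda>k. 1 / s k) \<longlonglongrightarrow> 0"
  shows "(\<lambda>k. of_real (exp (- lam k)) * Ig (lam k) 1 (m k) \<alpha> (t / s k)) \<longlonglongrightarrow> Gf \<alpha> y t"
proof -
  define \<theta> where "\<theta> k = t / s k" for k
  define Z where "Z k = of_real (lam k) * (iexp (\<theta> k) - 1) - \<i> * of_int (m k) * of_real (\<theta> k)" for k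
  define T where "T = - of_real (t^2 / 2) - \<i> * of_real (y * t)"
  define C where "C k = of_real (s k) * (iexp (- \<theta> k) - 1)" for k
  have lt: "lam k * (\<theta> k)^2 = t^2" for k
    using s[of k] by (simp add: lam \<theta>_def power_divide)
  have st: "s k * \<theta> k = t" for k using s[of k] by (simp add: \<theta>_def)
  have eqIg: "of_real (exp (- lam k)) * Ig (lam k) 1 (m k) \<alpha> (t / s k) = exp (Z k) * C k ^ \<alpha>" for k
  proof -
    have sq: "sqrt (lam k) = s k" using s[of k] by (simp add: lam)
    have p: "(iexp (\<theta> k)) powi (- m k) = exp (- (\<i> * of_int (m k) * of_real (\<theta> k)))"
      using cexp_powi[of "\<i> * of_real (\<theta> k)" "- m k"] by (simp add: algebra_simps)
    have inv: "inverse (iexp (\<theta> k)) = iexp (- \<theta> k)" by (simp add: exp_minus)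
    have zs: "Z k = of_real (lam k) * iexp (\<theta> k) + (- of_real (lam k)) + (- (\<i> * of_int (m k) * of_real (\<theta> k)))"
      by (simp add: Z_def algebra_simps)
    have ez: "exp (Z k) = exp (of_real (lam k) * iexp (\<theta> k)) * of_real (exp (- lam k)) * exp (- (\<i> * of_int (m k) * of_real (\<theta> k)))"
      unfolding zs exp_add using exp_of_real[of "- lam k"] by simp
    have "Ig (lam k) 1 (m k) \<alpha> (t / s k) = exp (of_real (lam k) * iexp (\<theta> k)) * exp (- (\<i> * of_int (m k) * of_real (\<theta> k))) * C k ^ \<alpha>"
      unfolding Ig_def \<theta>_def[symmetric] C_def sq inv[symmetric] using p by simp
    then show ?thesis unfolding ez by (simp add: algebra_simps)
  qed
  have Zlim: "Z \<longlonglongrightarrow> T"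
  proof (rule lim_by_bound)
    fix k
    have a1: "cmod (iexp (\<theta> k) - (\<Sum>j\<le>2. (\<i> * complex_of_real (\<theta> k)) ^ j / fact j)) \<le> \<bar>\<theta> k\<bar> ^ Suc 2 / fact (Suc 2)"
      by (rule iexp_approx1)
    have a2: "(\<Sum>j\<le>2. (\<i> * complex_of_real (\<theta> k)) ^ j / fact j) = 1 + \<i> * of_real (\<theta> k) - of_real ((\<theta> k)^2 / 2)"
      by (simp add: numeral_2_eq_2 power2_eq_square algebra_simps)
    have b1: "cmod (of_real (lam k) * (iexp (\<theta> k) - 1 - \<i> * of_real (\<theta> k) + of_real ((\<theta> k)^2 / 2))) \<le> lam k * (\<bar>\<theta> k\<bar>^3 / 6)"
    proof -
      have "cmod (iexp (\<theta> k) - 1 - \<i> * of_real (\<theta> k) + of_real ((\<theta> k)^2 / 2)) \<le> \<bar>\<theta> k\<bar>^3 / 6"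
        using a1 unfolding a2 by (simp add: fact_numeral algebra_simps)
      note X = this
      have l0: "lam k \<ge> 0" by (simp add: lam)
      have "cmod (of_real (lam k) * (iexp (\<theta> k) - 1 - \<i> * of_real (\<theta> k) + of_real ((\<theta> k)^2 / 2))) = lam k * cmod (iexp (\<theta> k) - 1 - \<i> * of_real (\<theta> k) + of_real ((\<theta> k)^2 / 2))"
        using l0 by (simp only: norm_mult norm_of_real abs_of_nonneg)
      also have "\<dots> \<le> lam k * (\<bar>\<theta> k\<bar>^3 / 6)" by (rule mult_left_mono[OF X l0])
      finally show ?thesis .
    qed
    have "lam k * (\<bar>\<theta> k\<bar>^3 / 6) = \<bar>t\<bar>^3 / 6 * (1 / s k)"
      using s[of k] by (simp add: lam \<theta>_def power_divide abs_divide field_simps power2_eq_square power3_eq_cube)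
    with b1 have b1': "cmod (of_real (lam k) * (iexp (\<theta> k) - 1 - \<i> * of_real (\<theta> k) + of_real ((\<theta> k)^2 / 2))) \<le> \<bar>t\<bar>^3 / 6 * (1 / s k)"
      by simp
    have b2: "cmod (\<i> * of_real (\<theta> k * (lam k - of_int (m k) + y * s k))) \<le> \<bar>t\<bar> * (1 / s k)"
    proof -
      have "\<bar>lam k - of_int (m k) + y * s k\<bar> \<le> 1" using m1[of k] m2[of k] by linarith
      then have "\<bar>\<theta> k\<bar> * \<bar>lam k - of_int (m k) + y * s k\<bar> \<le> \<bar>\<theta> k\<bar> * 1" by (intro mult_left_mono) auto
      moreover have "cmod (\<i> * of_real (\<theta> k * (lam k - of_int (m k) + y * s k))) = \<bar>\<theta> k\<bar> * \<bar>lam k - of_int (m k) + y * s k\<bar>"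
        by (simp only: norm_mult norm_of_real abs_mult) simp
      moreover have "\<bar>\<theta> k\<bar> * 1 = \<bar>t\<bar> * (1 / s k)" using s[of k] by (simp add: \<theta>_def abs_divide)
      ultimately show ?thesis by simp
    qed
    have "Z k - T = of_real (lam k) * (iexp (\<theta> k) - 1 - \<i> * of_real (\<theta> k) + of_real ((\<theta> k)^2 / 2)) + \<i> * of_real (\<theta> k * (lam k - of_int (m k) + y * s k))"
    proof -
      have "of_real (lam k) * of_real ((\<theta> k)^2 / 2) = (of_real (t^2 / 2) :: complex)"
        using arg_cong[where f=complex_of_real, OF lt[of k]] by simp
      moreover have "of_real (y * t) = (of_real (\<theta> k * (y * s k)) :: complex)"
        using st[of k] by (simp add: algebra_simps)
      ultimately show ?thesis unfolding Z_def T_def by (simp add: algebra_simps)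
    qed
    then have "cmod (Z k - T) \<le> cmod (of_real (lam k) * (iexp (\<theta> k) - 1 - \<i> * of_real (\<theta> k) + of_real ((\<theta> k)^2 / 2))) + cmod (\<i> * of_real (\<theta> k * (lam k - of_int (m k) + y * s k)))"
      by (simp add: norm_triangle_ineq)
    also have "\<dots> \<le> \<bar>t\<bar>^3 / 6 * (1 / s k) + \<bar>t\<bar> * (1 / s k)"
      using b1' b2 by (rule add_mono)
    finally show "cmod (Z k - T) \<le> (\<bar>t\<bar>^3 / 6 + \<bar>t\<bar>) * (1 / s k)" by (simp add: algebra_simps)
  next
    show "(\<lambda>k. (\<bar>t\<bar>^3 / 6 + \<bar>t\<bar>) * (1 / s k)) \<longlonglongrightarrow> 0"
      by (rule tendsto_mult_right_zero[OF u])
  qed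
  have Clim: "C \<longlonglongrightarrow> - \<i> * of_real t"
  proof (rule lim_by_bound)
    fix k
    have a1: "cmod (iexp (- \<theta> k) - (\<Sum>j\<le>1. (\<i> * complex_of_real (- \<theta> k)) ^ j / fact j)) \<le> \<bar>- \<theta> k\<bar> ^ Suc 1 / fact (Suc 1)"
      by (rule iexp_approx1)
    have e: "iexp (- \<theta> k) - (\<Sum>j\<le>1. (\<i> * complex_of_real (- \<theta> k)) ^ j / fact j) = iexp (- \<theta> k) - 1 + \<i> * of_real (\<theta> k)"
      by simp
    have a1': "cmod (iexp (- \<theta> k) - 1 + \<i> * of_real (\<theta> k)) \<le> (\<theta> k)^2 / 2"
      using a1 unfolding e by (simp add: power2_eq_square)
    have "C k - - \<i> * of_real t = of_real (s k) * (iexp (- \<theta> k) - 1 + \<i> * of_real (\<theta> k))"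
      unfolding C_def using st[of k] by (simp add: algebra_simps flip: of_real_mult)
    then have "cmod (C k - - \<i> * of_real t) = s k * cmod (iexp (- \<theta> k) - 1 + \<i> * of_real (\<theta> k))"
      using s[of k] by (simp add: norm_mult)
    also have "\<dots> \<le> s k * ((\<theta> k)^2 / 2)" using a1' s[of k] by (intro mult_left_mono) auto
    also have "\<dots> = t^2 / 2 * (1 / s k)" using s[of k] by (simp add: \<theta>_def power2_eq_square field_simps)
    finally show "cmod (C k - - \<i> * of_real t) \<le> t^2 / 2 * (1 / s k)" .
  next
    show "(\<lambda>k. t^2 / 2 * (1 / s k)) \<longlonglongrightarrow> 0"
      by (rule tendsto_mult_right_zero[OF u])
  qed
  have "(\<lambda>k. exp (Z k) * C k ^ \<alpha>) \<longlonglongrightarrow> exp T * (- \<i> * of_real t) ^ \<alpha>"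
    by (intro tendsto_intros Zlim Clim)
  moreover have "exp T * (- \<i> * of_real t) ^ \<alpha> = Gf \<alpha> y t"
  proof -
    have "T = of_real (- (t^2) / 2) + \<i> * of_real (- (y * t))" unfolding T_def by simp
    then have "exp T = of_real (exp (- (t^2) / 2)) * iexp (- (y * t))"
      by (simp only: exp_add exp_of_real)
    then show ?thesis unfolding Gf_def by (simp only: mult_ac)
  qed
  ultimately show ?thesis unfolding eqIg by simp
qed

definition gseq :: "nat \<Rightarrow> nat \<Rightarrow> nat \<Rightarrow> real \<Rightarrow> real \<Rightarrow> complex" where
  "gseq d \<alpha> n y t = (let lam = real n / real d; s = sqrt lam in
     (if t \<in> {-(pi * s)..pi * s} then of_real (exp (- lam)) * Ig lam 1 \<lfloor>y * s + lam\<rfloor> \<alpha> (t / s) else 0))"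

lemma gseq_rep:
  assumes d: "d \<ge> 1" and n: "n \<ge> 1"
  shows "complex_of_real ((Delta d n ^^ \<alpha>) (fstep d n) y) = integral UNIV (gseq d \<alpha> n y) / (2 * pi)"
proof -
  define lam where "lam = real n / real d"
  define s where "s = sqrt lam"
  define m where "m = \<lfloor>y * s + lam\<rfloor>"
  have lam: "lam > 0" using d n by (simp add: lam_def)
  have s: "s > 0" using lam by (simp add: s_def)
  let ?I = "integral {-pi..pi} (Ig lam 1 m \<alpha>)"
  have rep: "complex_of_real ((Delta d n ^^ \<alpha>) (fstep d n) y) = of_real (s * exp (- lam) / (2*pi)) * ?I"
    using Delta_rep[OF d n, of 1 \<alpha> y] unfolding lam_def[symmetric] s_def[symmetric] m_def[symmetric] by simp
  have "(Ig lam 1 m \<alpha> has_integral ?I) (cbox (-pi) pi)"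
    using Ig_int[of 1 lam m \<alpha> "-pi" pi] by (simp add: integrable_integral)
  then have "((\<lambda>x. Ig lam 1 m \<alpha> ((1/s) *\<^sub>R x + 0)) has_integral ?I /\<^sub>R (1/s) ^ DIM(real)) (cbox ((-pi - 0) /\<^sub>R (1/s)) ((pi - 0) /\<^sub>R (1/s)))"
    by (subst has_integral_affinity_iff) (use s in auto)
  moreover have "(-pi - 0) /\<^sub>R (1/s) = -(pi * s)" "(pi - 0) /\<^sub>R (1/s) = pi * s" using s by auto
  ultimately have "((\<lambda>x. Ig lam 1 m \<alpha> ((1/s) *\<^sub>R x + 0)) has_integral ?I /\<^sub>R (1/s) ^ DIM(real)) (cbox (-(pi * s)) (pi * s))"
    by (simp only:)
  then have hi: "((\<lambda>t. Ig lam 1 m \<alpha> (t / s)) has_integral of_real s * ?I) {-(pi * s)..pi * s}"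
    using s by (simp add: scaleR_conv_of_real divide_inverse mult.commute)
  have "integral UNIV (gseq d \<alpha> n y) = integral {-(pi * s)..pi * s} (\<lambda>t. of_real (exp (- lam)) * Ig lam 1 m \<alpha> (t / s))"
    unfolding gseq_def Let_def lam_def[symmetric] s_def[symmetric] m_def[symmetric]
    by (rule integral_restrict_UNIV)
  also have "\<dots> = of_real (exp (- lam)) * (of_real s * ?I)"
    using hi by (simp add: integral_unique)
  finally show ?thesis unfolding rep by simp
qed

lemma gseq_bound:
  assumes d: "d \<ge> 1" and n: "n \<ge> 1"
  shows "cmod (gseq d \<alpha> n y t) \<le> Hb (1/12) \<alpha> t"
proof -
  define lam where "lam = real n / real d"
  define s where "s = sqrt lam"
  define m where "m = \<lfloor>y * s + lam\<rfloor>"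
  have lam: "lam > 0" using d n by (simp add: lam_def)
  have s: "s > 0" using lam by (simp add: s_def)
  show ?thesis
  proof (cases "t \<in> {-(pi * s)..pi * s}")
    case True
    then have th: "\<bar>t / s\<bar> \<le> pi" using s by (auto simp: abs_le_iff divide_le_eq le_divide_eq mult.commute)
    have "cmod (Ig lam 1 m \<alpha> (t / s)) \<le> exp (lam * 1) * 1 powi (-m) * 1^\<alpha> * Hb (exp (- 0) / 12) \<alpha> (sqrt lam * (t / s))"
      by (rule Ig_norm_le[OF lam _ th]) auto
    also have "\<dots> = exp lam * Hb (1/12) \<alpha> t" using s by (simp add: s_def[symmetric])
    finally have "cmod (Ig lam 1 m \<alpha> (t / s)) \<le> exp lam * Hb (1/12) \<alpha> t" .
    then have "exp (- lam) * cmod (Ig lam 1 m \<alpha> (t / s)) \<le> exp (- lam) * (exp lam * Hb (1/12) \<alpha> t)"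
      by (intro mult_left_mono) auto
    moreover have "gseq d \<alpha> n y t = of_real (exp (- lam)) * Ig lam 1 m \<alpha> (t / s)"
      using True unfolding gseq_def Let_def lam_def[symmetric] s_def[symmetric] m_def[symmetric] by simp
    moreover have "cmod (of_real (exp (- lam)) * Ig lam 1 m \<alpha> (t / s)) = exp (- lam) * cmod (Ig lam 1 m \<alpha> (t / s))"
      by (simp add: norm_mult)
    moreover have "exp (- lam) * (exp lam * Hb (1/12) \<alpha> t) = Hb (1/12) \<alpha> t"
      by (simp add: exp_minus)
    ultimately show ?thesis by simp
  next
    case False
    then have "gseq d \<alpha> n y t = 0"
      unfolding gseq_def Let_def lam_def[symmetric] s_def[symmetric] by (simp only: if_False)
    then show ?thesis by (simp add: Hb_nonneg)
  qed
qed

lemma gseq_int: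
  assumes d: "d \<ge> 1" and n: "n \<ge> 1"
  shows "gseq d \<alpha> n y integrable_on UNIV"
proof -
  define lam where "lam = real n / real d"
  define s where "s = sqrt lam"
  define m where "m = \<lfloor>y * s + lam\<rfloor>"
  have lam: "lam > 0" using d n by (simp add: lam_def)
  have s: "s > 0" using lam by (simp add: s_def)
  have "continuous_on {-(pi * s)..pi * s} (\<lambda>t. of_real (exp (- lam)) * Ig lam 1 m \<alpha> (t / s))"
    using s by (intro continuous_intros continuous_on_compose2[OF Ig_cont[of 1 UNIV]]) auto
  then have "(\<lambda>t. of_real (exp (- lam)) * Ig lam 1 m \<alpha> (t / s)) integrable_on {-(pi * s)..pi * s}"
    by (rule integrable_continuous_interval)
  then show ?thesis
    unfolding gseq_def Let_def lam_def[symmetric] s_def[symmetric] m_def[symmetric]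
    by (simp only: Henstock_Kurzweil_Integration.integrable_restrict_UNIV)
qed

lemma gseq_lim:
  assumes d: "d \<ge> 1"
  shows "(\<lambda>k. gseq d \<alpha> (Suc k) y t) \<longlonglongrightarrow> Gf \<alpha> y t"
proof -
  define lam where "lam k = real (Suc k) / real d" for k
  define s where "s k = sqrt (lam k)" for k
  define m where "m k = \<lfloor>y * s k + lam k\<rfloor>" for k
  have lam: "lam k > 0" for k using d by (simp add: lam_def)
  have s: "s k > 0" for k using lam[of k] by (simp add: s_def)
  have u: "(\<lambda>k. 1 / s k) \<longlonglongrightarrow> 0"
  proof -
    have "(\<lambda>k. real d / real k) \<longlonglongrightarrow> 0" by (rule lim_const_over_n)
    then have "(\<lambda>k. real d / real (Suc k)) \<longlonglongrightarrow> 0" by (rule LIMSEQ_Suc)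
    then have "(\<lambda>k. sqrt (real d / real (Suc k))) \<longlonglongrightarrow> sqrt 0" by (rule tendsto_real_sqrt)
    moreover have "sqrt (real d / real (Suc k)) = 1 / s k" for k
      by (simp add: s_def lam_def real_sqrt_divide)
    ultimately show ?thesis by simp
  qed
  have main: "(\<lambda>k. of_real (exp (- lam k)) * Ig (lam k) 1 (m k) \<alpha> (t / s k)) \<longlonglongrightarrow> Gf \<alpha> y t"
  proof (rule ptwise_lim[OF s])
    show "lam k = (s k)^2" for k using lam[of k] by (simp add: s_def)
    show "of_int (m k) \<le> y * s k + lam k" for k by (simp add: m_def)
    show "y * s k + lam k < of_int (m k) + 1" for k by (simp add: m_def)
  qed (rule u)
  have pos: "pi / (\<bar>t\<bar> + 1) > 0" by simp
  have ev: "eventually (\<lambda>k. 1 / s k < pi / (\<bar>t\<bar> + 1)) sequentially"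
    using order_tendstoD(2)[OF u pos] .
  have "eventually (\<lambda>k. of_real (exp (- lam k)) * Ig (lam k) 1 (m k) \<alpha> (t / s k) = gseq d \<alpha> (Suc k) y t) sequentially"
  proof (rule eventually_mono[OF ev])
    fix k assume k: "1 / s k < pi / (\<bar>t\<bar> + 1)"
    then have "\<bar>t\<bar> + 1 < pi * s k" using s[of k] by (simp add: field_simps)
    then have "t \<in> {-(pi * s k)..pi * s k}" by (auto simp: abs_le_iff)
    then show "of_real (exp (- lam k)) * Ig (lam k) 1 (m k) \<alpha> (t / s k) = gseq d \<alpha> (Suc k) y t"
      unfolding gseq_def Let_def lam_def[symmetric] s_def[symmetric] m_def[symmetric]
      by (simp add: lam_def s_def m_def)
  qed
  then show ?thesis by (rule Lim_transform_eventually[OF main])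
qed

lemma Delta_lim:
  assumes d: "d \<ge> 1"
  shows "(\<lambda>n. (Delta d n ^^ \<alpha>) (fstep d n) y) \<longlonglongrightarrow> Re (integral UNIV (Gf \<alpha> y)) / (2 * pi)"
proof -
  have "(\<lambda>k. integral UNIV (gseq d \<alpha> (Suc k) y)) \<longlonglongrightarrow> integral UNIV (Gf \<alpha> y)"
  proof (rule dominated_convergence(2))
    show "gseq d \<alpha> (Suc k) y integrable_on UNIV" for k by (rule gseq_int[OF d]) simp
    show "Hb (1/12) \<alpha> integrable_on UNIV" by (rule Hb_integrable) simp
    show "norm (gseq d \<alpha> (Suc k) y t) \<le> Hb (1/12) \<alpha> t" for k t by (rule gseq_bound[OF d]) simp
    show "(\<lambda>k. gseq d \<alpha> (Suc k) y t) \<longlonglongrightarrow> Gf \<alpha> y t" for t by (rule gseq_lim[OF d])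
  qed
  then have "(\<lambda>k. Re (integral UNIV (gseq d \<alpha> (Suc k) y) / (2 * pi))) \<longlonglongrightarrow> Re (integral UNIV (Gf \<alpha> y) / (2 * pi))"
    by (intro tendsto_Re tendsto_divide tendsto_const) auto
  moreover have "Re (integral UNIV (gseq d \<alpha> (Suc k) y) / (2 * pi)) = (Delta d (Suc k) ^^ \<alpha>) (fstep d (Suc k)) y" for k
    using arg_cong[where f=Re, OF gseq_rep[OF d, of "Suc k" \<alpha> y]] by simp
  moreover have "Re (integral UNIV (Gf \<alpha> y) / (2 * pi)) = Re (integral UNIV (Gf \<alpha> y)) / (2 * pi)" by simp
  ultimately have "(\<lambda>k. (Delta d (Suc k) ^^ \<alpha>) (fstep d (Suc k)) y) \<longlonglongrightarrow> Re (integral UNIV (Gf \<alpha> y)) / (2 * pi)"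
    by simp
  then show ?thesis by (rule LIMSEQ_imp_Suc)
qed

theorem lemma5:
  fixes d :: nat
  assumes "d \<ge> 1"
  shows "(\<forall>(\<alpha>::nat) (y::real).
            ((\<lambda>n. (Delta d n ^^ \<alpha>) (fstep d n) y) \<longlongrightarrow>
               (deriv ^^ \<alpha>) (\<lambda>t. exp (- (t^2) / 2) / sqrt (2 * pi)) y) sequentially)
       \<and> (\<forall>\<alpha>::nat. \<exists>P :: real poly. \<forall>n::nat. n \<ge> 1 \<longrightarrow>
            (\<forall>y::real. \<bar>(Delta d n ^^ \<alpha>) (fstep d n) y\<bar> < poly P y * exp (- \<bar>y\<bar>)))"
proof (intro conjI allI)
  fix \<alpha> :: nat and y :: real
  show "((\<lambda>n. (Delta d n ^^ \<alpha>) (fstep d n) y) \<longlongrightarrow>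
               (deriv ^^ \<alpha>) (\<lambda>t. exp (- (t^2) / 2) / sqrt (2 * pi)) y) sequentially"
    unfolding ident by (rule Delta_lim[OF assms])
next
  fix \<alpha> :: nat
  show "\<exists>P :: real poly. \<forall>n::nat. n \<ge> 1 \<longrightarrow>
            (\<forall>y::real. \<bar>(Delta d n ^^ \<alpha>) (fstep d n) y\<bar> < poly P y * exp (- \<bar>y\<bar>))"
  proof (intro exI allI impI)
    fix n :: nat and y :: real
    assume n: "n \<ge> 1"
    have "\<bar>(Delta d n ^^ \<alpha>) (fstep d n) y\<bar> \<le> Cb d \<alpha> * exp (- \<bar>y\<bar>)"
      by (rule Delta_bound[OF assms n])
    also have "\<dots> < (Cb d \<alpha> + 1) * exp (- \<bar>y\<bar>)" by (simp add: algebra_simps)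
    also have "\<dots> = poly [:Cb d \<alpha> + 1:] y * exp (- \<bar>y\<bar>)" by simp
    finally show "\<bar>(Delta d n ^^ \<alpha>) (fstep d n) y\<bar> < poly [:Cb d \<alpha> + 1:] y * exp (- \<bar>y\<bar>)" .
  qed
qed

end
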